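(* Let $\xi=(\tau_L,\delta_L,\tau_R,\delta_R)\in\Phi_{\rm BYG}$ and suppose $J_1(\xi)>1$ and $\lambda_L^s+|\lambda_R^s|<1$. Let $\alpha\subset\Omega$ be a line segment with slope in $K=[-\lambda_L^s,|\lambda_R^s|]$. Then there exist $n\ge1$ and points $P$ on the $y$-axis and $Q$ on the $x$-axis such that the line segment from $P$ to $Q$ is contained in $f_\xi^n(\alpha)$. Moreover, this segment from $P$ to $Q$ intersects the line segment from $V$ to $f_\xi^{-1}(V)$ transversally.
   Context: For $\xi=(\tau_L,\delta_L,\tau_R,\delta_R)\in\mathbb{R}^4$ define $f_\xi(x,y)=(\tau_L x+y+1,\,-\delta_L x)$ if $x\le 0$ and $f_\xi(x,y)=(\tau_R x+y+1,\,-\delta_R x)$ if $x\ge 0$. Let $A_L=\begin{bmatrix}\tau_L&1\\-\delta_L&0\end{bmatrix}$, $A_R=\begin{bmatrix}\tau_R&1\\-\delta_R&0\end{bmatrix}$, $\Phi=\{\xi: \tau_L>\delta_L+1,\ \delta_L>0,\ \tau_R<-(\delta_R+1),\ \delta_R>0\}$. For $\xi\in\Phi$ the eigenvalues of $A_L$ are real with $0<\lambda_L^s<1<\lambda_L^u$, those of $A_R$ are real with $\lambda_R^u<-1<\lambda_R^s<0$, $f_\xi$ is a homeomorphism, and $Y=\left(\frac{-1}{\tau_L-\delta_L-1},\frac{\delta_L}{\tau_L-\delta_L-1}\right)$ is a fixed point. Let $\phi(\xi)=\delta_R-\left(\tau_R+\delta_L+\delta_R-(1+\tau_R)\lambda_L^u\right)\lambda_L^u$,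 $\Phi_{\rm BYG}=\{\xi\in\Phi:\phi(\xi)>0\}$, and $J_1(\xi)=\frac{\lambda_L^u(\lambda_R^u)^2}{\lambda_L^u+|\lambda_R^u|}$. Let $D=\left(\frac{1}{1-\lambda_L^s},0\right)$. Let $E^s(Y)$ be the line through $Y$ in the direction of an eigenvector of $A_L$ for $\lambda_L^s$, let $B$ be the intersection of the line segment from $Y$ to $D$ with the line through $f_\xi(D)$ parallel to $E^s(Y)$, and let $\Omega$ be the filled triangle with vertices $D$, $f_\xi(D)$, $B$. Let $V=\left(0,\frac{-\lambda_R^u}{\lambda_R^u-1}\right)$. A line segment has slope $m$ if it is parallel to $(1,m)$. *)

theory Defs
  imports "HOL-Analysis.Analysis"
begin

definition fxi :: "real \<Rightarrow> real \<Rightarrow> real \<Rightarrow> real \<Rightarrow> real \<times> real \<Rightarrow> real \<times> real" where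
  "fxi tL dL tR dR p = (if fst p \<le> 0
      then (tL * fst p + snd p + 1, - dL * fst p)
      else (tR * fst p + snd p + 1, - dR * fst p))"

definition A_L :: "real \<Rightarrow> real \<Rightarrow> real \<times> real \<Rightarrow> real \<times> real" where
  "A_L tL dL v = (tL * fst v + snd v, - dL * fst v)"

definition Phi :: "(real \<times> real \<times> real \<times> real) set" where
  "Phi = {(tL, dL, tR, dR). tL > dL + 1 \<and> dL > 0 \<and> tR < -(dR + 1) \<and> dR > 0}"

text \<open>Eigenvalues (roots of the characteristic polynomial x^2 - t x + d).\<close>
definition lamLs :: "real \<Rightarrow> real \<Rightarrow> real" where
  "lamLs tL dL = (tL - sqrt (tL^2 - 4 * dL)) / 2"
definition lamLu :: "real \<Rightarrow> real \<Rightarrow> real" where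
  "lamLu tL dL = (tL + sqrt (tL^2 - 4 * dL)) / 2"
definition lamRs :: "real \<Rightarrow> real \<Rightarrow> real" where
  "lamRs tR dR = (tR + sqrt (tR^2 - 4 * dR)) / 2"
definition lamRu :: "real \<Rightarrow> real \<Rightarrow> real" where
  "lamRu tR dR = (tR - sqrt (tR^2 - 4 * dR)) / 2"

definition phi :: "real \<Rightarrow> real \<Rightarrow> real \<Rightarrow> real \<Rightarrow> real" where
  "phi tL dL tR dR = dR - (tR + dL + dR - (1 + tR) * lamLu tL dL) * lamLu tL dL"

definition Phi_BYG :: "(real \<times> real \<times> real \<times> real) set" where
  "Phi_BYG = {(tL, dL, tR, dR). (tL, dL, tR, dR) \<in> Phi \<and> phi tL dL tR dR > 0}"

definition J1 :: "real \<Rightarrow> real \<Rightarrow> real \<Rightarrow> real \<Rightarrow> real" where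
  "J1 tL dL tR dR = lamLu tL dL * (lamRu tR dR)^2 / (lamLu tL dL + \<bar>lamRu tR dR\<bar>)"

definition Ypt :: "real \<Rightarrow> real \<Rightarrow> real \<times> real" where
  "Ypt tL dL = (-1 / (tL - dL - 1), dL / (tL - dL - 1))"

definition Dpt :: "real \<Rightarrow> real \<Rightarrow> real \<times> real" where
  "Dpt tL dL = (1 / (1 - lamLs tL dL), 0)"

definition Bpt :: "real \<Rightarrow> real \<Rightarrow> real \<Rightarrow> real \<Rightarrow> real \<times> real" where
  "Bpt tL dL tR dR = (THE b. b \<in> closed_segment (Ypt tL dL) (Dpt tL dL) \<and>
     (\<exists>v t. v \<noteq> 0 \<and> A_L tL dL v = lamLs tL dL *\<^sub>R v \<and>
            b = fxi tL dL tR dR (Dpt tL dL) + t *\<^sub>R v))"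

definition Omega :: "real \<Rightarrow> real \<Rightarrow> real \<Rightarrow> real \<Rightarrow> (real \<times> real) set" where
  "Omega tL dL tR dR = convex hull {Dpt tL dL, fxi tL dL tR dR (Dpt tL dL), Bpt tL dL tR dR}"

definition Vpt :: "real \<Rightarrow> real \<Rightarrow> real \<times> real" where
  "Vpt tR dR = (0, - lamRu tR dR / (lamRu tR dR - 1))"

definition is_segment_with_slope :: "(real \<times> real) set \<Rightarrow> real \<Rightarrow> bool" where
  "is_segment_with_slope S m \<longleftrightarrow>
     (\<exists>a b. a \<noteq> b \<and> S = closed_segment a b \<and> (\<exists>c. c \<noteq> 0 \<and> b - a = c *\<^sub>R (1, m)))"

definition transversal_segments :: "real \<times> real \<Rightarrow> real \<times> real \<Rightarrow> real \<times> real \<Rightarrow> real \<times> real \<Rightarrow> bool" where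
  "transversal_segments p q u w \<longleftrightarrow>
     p \<noteq> q \<and> u \<noteq> w \<and> closed_segment p q \<inter> closed_segment u w \<noteq> {} \<and>
     fst (q - p) * snd (w - u) - snd (q - p) * fst (w - u) \<noteq> 0"

end

theory Submission
  imports Defs
begin


definition orient :: "real \<times> real \<Rightarrow> real \<times> real \<Rightarrow> real \<times> real \<Rightarrow> real" where
  "orient P Q X = (fst Q - fst P) * (snd X - snd P) - (snd Q - snd P) * (fst X - fst P)"

definition aff :: "real \<Rightarrow> real \<Rightarrow> real \<Rightarrow> real \<Rightarrow> real \<Rightarrow> real \<Rightarrow> real \<times> real \<Rightarrow> real \<times> real" where
  "aff m1 m2 e1 m3 m4 e2 p = (m1 * fst p + m2 * snd p + e1, m3 * fst p + m4 * snd p + e2)"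

lemma hull3_lin:
  fixes g :: "real \<times> real \<Rightarrow> real" and A B C p :: "real \<times> real"
  assumes "p \<in> convex hull {A, B, C}"
    and "\<And>x y. g (x, y) = c1 * x + c2 * y + c0"
    and "g A \<le> 0" "g B \<le> 0" "g C \<le> 0"
  shows "g p \<le> 0"
proof -
  obtain \<alpha> \<beta> \<gamma> where h: "0 \<le> \<alpha>" "0 \<le> \<beta>" "0 \<le> \<gamma>" "\<alpha> + \<beta> + \<gamma> = 1"
    "p = \<alpha> *\<^sub>R A + \<beta> *\<^sub>R B + \<gamma> *\<^sub>R C"
    using assms(1) unfolding convex_hull_3 by blast
  have gg: "\<And>q. g q = c1 * fst q + c2 * snd q + c0"
    using assms(2) by (metis prod.collapse)
  have "g p = \<alpha> * g A + \<beta> * g B + \<gamma> * g C"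
  proof -
    have "g p = c1 * (\<alpha> * fst A + \<beta> * fst B + \<gamma> * fst C) + c2 * (\<alpha> * snd A + \<beta> * snd B + \<gamma> * snd C) + (\<alpha> + \<beta> + \<gamma>) * c0"
      unfolding gg h(5) h(4) by simp
    then show ?thesis unfolding gg by (simp add: algebra_simps)
  qed
  also have "\<dots> \<le> 0"
    using h assms(3-5) by (simp add: add_nonpos_nonpos mult_nonneg_nonpos)
  finally show ?thesis .
qed

lemma hull3_G:
  fixes P Q :: "real \<times> real"
  assumes "p \<in> convex hull {A, B, C}"
    and "G = (\<lambda>q. orient P Q (aff m1 m2 e1 m3 m4 e2 q) + c * fst q + d * snd q + e)"
    and "G A \<le> 0" "G B \<le> 0" "G C \<le> 0"
  shows "G p \<le> 0"
proof (rule hull3_lin[OF assms(1), where g = G])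
  fix x y
  show "G (x, y) =
    ((fst Q - fst P) * m3 - (snd Q - snd P) * m1 + c) * x
    + ((fst Q - fst P) * m4 - (snd Q - snd P) * m2 + d) * y
    + ((fst Q - fst P) * (e2 - snd P) - (snd Q - snd P) * (e1 - fst P) + e)"
    unfolding assms(2) orient_def aff_def by (simp add: algebra_simps)
qed (use assms in auto)

lemma in_hull3:
  assumes "orient A B C < 0"
    and "orient A B X \<le> 0" "orient B C X \<le> 0" "orient C A X \<le> 0"
  shows "X \<in> convex hull {A, B, C}"
proof -
  define \<Delta> where "\<Delta> = orient A B C"
  define \<alpha> where "\<alpha> = orient B C X / \<Delta>"
  define \<beta> where "\<beta> = orient C A X / \<Delta>"
  define \<gamma> where "\<gamma> = orient A B X / \<Delta>"
  have d: "\<Delta> < 0" using assms(1) \<Delta>_def by simp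
  have "0 \<le> \<alpha>" "0 \<le> \<beta>" "0 \<le> \<gamma>"
    using d assms by (auto simp: \<alpha>_def \<beta>_def \<gamma>_def \<Delta>_def divide_nonpos_neg)
  have s: "orient B C X + orient C A X + orient A B X = \<Delta>"
    unfolding \<Delta>_def orient_def by (simp add: algebra_simps)
  have "\<alpha> + \<beta> + \<gamma> = (orient B C X + orient C A X + orient A B X) / \<Delta>"
    unfolding \<alpha>_def \<beta>_def \<gamma>_def by (simp add: add_divide_distrib)
  then have s1: "\<alpha> + \<beta> + \<gamma> = 1" using s d by simp
  have v: "\<Delta> *\<^sub>R X = orient B C X *\<^sub>R A + orient C A X *\<^sub>R B + orient A B X *\<^sub>R C"
    unfolding \<Delta>_def orient_def by (simp add: prod_eq_iff algebra_simps)
  have "X = (1/\<Delta>) *\<^sub>R (\<Delta> *\<^sub>R X)" using d by simp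
  also have "\<dots> = \<alpha> *\<^sub>R A + \<beta> *\<^sub>R B + \<gamma> *\<^sub>R C"
    unfolding v \<alpha>_def \<beta>_def \<gamma>_def by (simp add: scaleR_add_right)
  finally have "X = \<alpha> *\<^sub>R A + \<beta> *\<^sub>R B + \<gamma> *\<^sub>R C" .
  then show ?thesis unfolding convex_hull_3 using s1 \<open>0 \<le> \<alpha>\<close> \<open>0 \<le> \<beta>\<close> \<open>0 \<le> \<gamma>\<close> by blast
qed

lemma aff_segment:
  "aff m1 m2 e1 m3 m4 e2 ` closed_segment x y
    = closed_segment (aff m1 m2 e1 m3 m4 e2 x) (aff m1 m2 e1 m3 m4 e2 y)"
proof -
  let ?h = "aff m1 m2 e1 m3 m4 e2"
  have k: "?h ((1 - t) *\<^sub>R x + t *\<^sub>R y) = (1 - t) *\<^sub>R ?h x + t *\<^sub>R ?h y" for t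
    by (simp add: aff_def prod_eq_iff algebra_simps)
  show ?thesis
  proof (rule set_eqI)
    fix z
    show "z \<in> ?h ` closed_segment x y \<longleftrightarrow> z \<in> closed_segment (?h x) (?h y)"
    proof
      assume "z \<in> ?h ` closed_segment x y"
      then obtain w where w: "w \<in> closed_segment x y" "z = ?h w" by (auto simp: image_iff)
      from w(1) obtain t where t: "0 \<le> t" "t \<le> 1" "w = (1 - t) *\<^sub>R x + t *\<^sub>R y"
        unfolding in_segment by blast
      have "z = (1 - t) *\<^sub>R ?h x + t *\<^sub>R ?h y" using w(2) t(3) k by simp
      then show "z \<in> closed_segment (?h x) (?h y)" unfolding in_segment using t(1,2) by blast
    next
      assume "z \<in> closed_segment (?h x) (?h y)"
      then obtain t where t: "0 \<le> t" "t \<le> 1" "z = (1 - t) *\<^sub>R ?h x + t *\<^sub>R ?h y"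
        unfolding in_segment by blast
      have "(1 - t) *\<^sub>R x + t *\<^sub>R y \<in> closed_segment x y" unfolding in_segment using t(1,2) by blast
      moreover have "z = ?h ((1 - t) *\<^sub>R x + t *\<^sub>R y)" using t(3) k by simp
      ultimately show "z \<in> ?h ` closed_segment x y" by blast
    qed
  qed
qed




locale byg =
  fixes a b r u :: real
  assumes a0: "0 < a" and a1: "a < 1" and b1: "1 < b" and r0: "0 < r" and u1: "1 < u"
    and ar: "a + r < 1"
    and phipos: "0 < b*b - r*u*b - a*b*b - b*b*r - b*b*u + r*u + b*r + b*u"
    and J: "1 < b*u^2/(b+u)"
begin

definition "k = 1/(1-a)"
definition "S = r*u + a*b + b*r + b*u"
definition "e = 1/(b-a)"
definition "sg = S*k*e"
definition "D = (k, 0::real)"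
definition "F = (1 - (r+u)*k, -(r*u*k))"
definition "B = (k - sg, a * sg)"
definition "A2 = a^2 + a*r + a*u + r*u"
definition "ph = b*b - r*u*b - a*b*b - b*b*r - b*b*u + r*u + b*r + b*u"
definition "fL = aff (a+b) 1 1 (-(a*b)) 0 0"
definition "fR = aff (-(r+u)) 1 1 (-(r*u)) 0 0"

lemma nz: "1 - a \<noteq> 0" "b - a \<noteq> 0" "r + u + a \<noteq> 0" "u + 1 \<noteq> 0" "r \<noteq> 0" "u \<noteq> 0" "u + a \<noteq> 0"
  using a0 a1 b1 r0 u1 by auto

lemma kk: "k * (1 - a) = 1" unfolding k_def using nz by simp
lemma ee: "e * (b - a) = 1" unfolding e_def using nz by simp

lemmas E = S_def sg_def D_def F_def B_def A2_def ph_def fL_def fR_def aff_def orient_def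

lemma oDFB: "orient D F B = -(S*A2*k^2*e)"
  using kk ee by (simp only: E fst_conv snd_conv) algebra

lemma L1D: "orient D F (fL D) - b*A2*k*fst D = 0"
  using kk ee by (simp only: E fst_conv snd_conv) algebra
lemma L1F: "orient D F (fL F) - b*A2*k*fst F = -(r*u*A2*k^2)"
  using kk ee by (simp only: E fst_conv snd_conv) algebra
lemma L1B: "orient D F (fL B) - b*A2*k*fst B = 0"
  using kk ee by (simp only: E fst_conv snd_conv) algebra


lemma L2D: "orient F B (fL D) = -(A2*(b^2+b*r+b*u+r*u)*k^2*e)"
  using kk ee by (simp only: E fst_conv snd_conv) algebra
lemma L2F: "orient F B (fL F) = -(ph*A2*k^2*e)"
  using kk ee by (simp only: E fst_conv snd_conv) algebra
lemma L2B: "orient F B (fL B) = -(ph*A2*k^2*e)"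
  using kk ee by (simp only: E fst_conv snd_conv) algebra
lemma L3D: "orient B D (fL D) = 0"
  using kk ee by (simp only: E fst_conv snd_conv) algebra
lemma L3F: "orient B D (fL F) = -(a*S*A2*k^2*e)"
  using kk ee by (simp only: E fst_conv snd_conv) algebra
lemma L3B: "orient B D (fL B) = 0"
  using kk ee by (simp only: E fst_conv snd_conv) algebra
lemma R1D: "orient D F (fR D) = 0"
  by (simp add: E algebra_simps)
lemma R1F: "orient D F (fR F) = -(r*u*A2*k^2)"
  using kk ee by (simp only: E fst_conv snd_conv) algebra
lemma R1B: "orient D F (fR B) = 0"
  using kk ee by (simp only: E fst_conv snd_conv) algebra
lemma R2D: "orient F B (fR D) = 0"
  by (simp add: E algebra_simps)
lemma R2F: "orient F B (fR F) = -(A2*(a*b*r+a*b*u+a*r*u+b*r^2+b*r*u+b*u^2+r^2*u+r*u^2)*k^2*e)"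
  using kk ee by (simp only: E fst_conv snd_conv) algebra
lemma R2B: "orient F B (fR B) = -(S^2*A2*k^2*e^2)"
  using kk ee by (simp only: E fst_conv snd_conv) algebra
lemma R3D: "orient B D (fR D) + S*A2*k*e*fst D = 0"
  using kk ee by (simp only: E fst_conv snd_conv) algebra
lemma R3F: "orient B D (fR F) + S*A2*k*e*fst F = -(a*S*A2*k^2*e)"
  using kk ee by (simp only: E fst_conv snd_conv) algebra
lemma R3B: "orient B D (fR B) + S*A2*k*e*fst B = 0"
  using kk ee by (simp only: E fst_conv snd_conv) algebra

definition "iu1 = 1/(u+1)"
definition "ir = 1/r"
definition "iu = 1/u"
definition "im = 1/(r+u+a)"
definition "iua = 1/(u+a)"
definition "v = -u*iu1"
definition "x1 = ir*iu1"
definition "m3 = r*u*im"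
definition "cc = (1-a-r-r*u)*ir*iu*iua"

lemma invs: "iu1*(u+1) = 1" "ir*r = 1" "iu*u = 1" "im*(r+u+a) = 1" "iua*(u+a) = 1"
  unfolding iu1_def ir_def iu_def im_def iua_def using nz by auto

lemma SD: "v - snd D + m3 * fst D = -(u*(u+a)*(1-a-r)*k*iu1*im)"
  using kk invs by (simp only: E v_def m3_def fst_conv snd_conv) algebra
lemma SF: "v - snd F + m3 * fst F = -(u*(u+a)*(1-a-r)*k*iu1*im)"
  using kk invs by (simp only: E v_def m3_def fst_conv snd_conv) algebra
lemma SB: "v - snd B + m3 * fst B = -(u*(u+a)*(1-a-r)*k*iu1*im) - sg*(a+m3)"
  using kk invs by (simp only: E v_def m3_def fst_conv snd_conv) algebra

lemma WD: "fst D - x1 - cc*(snd D - v - u*fst D) = 0"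
  using kk invs by (simp only: E v_def x1_def cc_def fst_conv snd_conv) algebra
lemma WF: "fst F - x1 - cc*(snd F - v - u*fst F) = -((1-a-r+r*(a+r))*k*ir)"
  using kk invs by (simp only: E v_def x1_def cc_def fst_conv snd_conv) algebra
lemma WB: "fst B - x1 - cc*(snd B - v - u*fst B) = -((1-a-r)*S*k*e*ir*iu)"
  using kk ee invs by (simp only: E v_def x1_def cc_def fst_conv snd_conv) algebra

lemma pos: "0 < k" "0 < e" "0 < S" "0 < A2" "0 < ph" "0 < iu1" "0 < ir" "0 < iu" "0 < im" "0 < iua"
  "0 < b - a" "0 < 1 - a"
  using a0 a1 b1 r0 u1 phipos
  by (auto simp: k_def e_def S_def A2_def ph_def iu1_def ir_def iu_def im_def iua_def
      intro!: add_pos_pos mult_pos_pos)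

lemma sgpos: "0 < sg" "0 < m3"
  using pos a0 r0 u1 unfolding sg_def m3_def by auto

definition "Om = convex hull {D, F, B}"

lemma hullG:
  assumes "q \<in> Om" "h = aff m1 m2 e1 m3' m4 e2"
    and "\<And>V. V \<in> {D, F, B} \<Longrightarrow> orient P Q (h V) + c * fst V + d * snd V + e' \<le> 0"
  shows "orient P Q (h q) + c * fst q + d * snd q + e' \<le> 0"
  using hull3_G[OF assms(1)[unfolded Om_def], of "\<lambda>x. orient P Q (h x) + c * fst x + d * snd x + e'"
      P Q m1 m2 e1 m3' m4 e2 c d e'] assms(2,3) by auto

lemma orient_same: "orient P P X = 0" by (simp add: orient_def)

lemma oDFB_neg: "orient D F B < 0"
  unfolding oDFB using pos by simp

lemma inv_left:
  assumes q: "q \<in> Om" and x: "fst q \<le> 0"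
  shows "fL q \<in> Om"
proof -
  have "orient D F (fL q) + (-(b*A2*k)) * fst q + 0 * snd q + 0 \<le> 0"
  proof (rule hullG[OF q fL_def])
    fix V assume "V \<in> {D, F, B}"
    then show "orient D F (fL V) + (-(b*A2*k)) * fst V + 0 * snd V + 0 \<le> 0"
    proof -
      have "0 \<le> r*u*A2*k^2" using pos r0 u1 by simp
      then show ?thesis using \<open>V \<in> {D, F, B}\<close> L1D L1F L1B by auto
    qed
  qed
  then have 1: "orient D F (fL q) \<le> 0"
  proof -
    have "0 \<le> b*A2*k" using pos b1 by simp
    then have "b*A2*k * fst q \<le> 0" using x by (simp add: mult_nonneg_nonpos)
    then show ?thesis using \<open>orient D F (fL q) + (-(b*A2*k)) * fst q + 0 * snd q + 0 \<le> 0\<close> by simp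
  qed
  have "orient F B (fL q) + 0 * fst q + 0 * snd q + 0 \<le> 0"
  proof (rule hullG[OF q fL_def])
    fix V assume "V \<in> {D, F, B}"
    then show "orient F B (fL V) + 0 * fst V + 0 * snd V + 0 \<le> 0"
    proof -
      have "0 \<le> A2*(b^2+b*r+b*u+r*u)*k^2*e" "0 \<le> ph*A2*k^2*e" using pos r0 u1 b1 by simp_all
      then show ?thesis using \<open>V \<in> {D, F, B}\<close> L2D L2F L2B by auto
    qed
  qed
  then have 2: "orient F B (fL q) \<le> 0" by simp
  have "orient B D (fL q) + 0 * fst q + 0 * snd q + 0 \<le> 0"
  proof (rule hullG[OF q fL_def])
    fix V assume "V \<in> {D, F, B}"
    then show "orient B D (fL V) + 0 * fst V + 0 * snd V + 0 \<le> 0"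
    proof -
      have "0 \<le> a*S*A2*k^2*e" using pos a0 by simp
      then show ?thesis using \<open>V \<in> {D, F, B}\<close> L3D L3F L3B by auto
    qed
  qed
  then have 3: "orient B D (fL q) \<le> 0" by simp
  show ?thesis unfolding Om_def by (rule in_hull3[OF oDFB_neg 1 2 3])
qed

lemma inv_right:
  assumes q: "q \<in> Om" and x: "0 \<le> fst q"
  shows "fR q \<in> Om"
proof -
  have "orient D F (fR q) + 0 * fst q + 0 * snd q + 0 \<le> 0"
  proof (rule hullG[OF q fR_def])
    fix V assume "V \<in> {D, F, B}"
    then show "orient D F (fR V) + 0 * fst V + 0 * snd V + 0 \<le> 0"
    proof -
      have "0 \<le> r*u*A2*k^2" using pos r0 u1 by simp
      then show ?thesis using \<open>V \<in> {D, F, B}\<close> R1D R1F R1B by auto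
    qed
  qed
  then have 1: "orient D F (fR q) \<le> 0" by simp
  have "orient F B (fR q) + 0 * fst q + 0 * snd q + 0 \<le> 0"
  proof (rule hullG[OF q fR_def])
    fix V assume "V \<in> {D, F, B}"
    then show "orient F B (fR V) + 0 * fst V + 0 * snd V + 0 \<le> 0"
    proof -
      have "0 \<le> A2*(a*b*r+a*b*u+a*r*u+b*r^2+b*r*u+b*u^2+r^2*u+r*u^2)*k^2*e" "0 \<le> S^2*A2*k^2*e^2"
        using pos r0 u1 b1 a0 by simp_all
      then show ?thesis using \<open>V \<in> {D, F, B}\<close> R2D R2F R2B by auto
    qed
  qed
  then have 2: "orient F B (fR q) \<le> 0" by simp
  have "orient B D (fR q) + (S*A2*k*e) * fst q + 0 * snd q + 0 \<le> 0"
  proof (rule hullG[OF q fR_def])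
    fix V assume "V \<in> {D, F, B}"
    then show "orient B D (fR V) + (S*A2*k*e) * fst V + 0 * snd V + 0 \<le> 0"
    proof -
      have "0 \<le> a*S*A2*k^2*e" using pos a0 by simp
      then show ?thesis using \<open>V \<in> {D, F, B}\<close> R3D R3F R3B by auto
    qed
  qed
  then have 3: "orient B D (fR q) \<le> 0"
  proof -
    have "0 \<le> S*A2*k*e" using pos by simp
    then have "0 \<le> S*A2*k*e * fst q" using x by simp
    then show ?thesis using \<open>orient B D (fR q) + (S*A2*k*e) * fst q + 0 * snd q + 0 \<le> 0\<close> by simp
  qed
  show ?thesis unfolding Om_def by (rule in_hull3[OF oDFB_neg 1 2 3])
qed

definition "f = fxi (a+b) (a*b) (-(r+u)) (r*u)"

lemma f_eq: "f q = (if fst q \<le> 0 then fL q else fR q)"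
  by (simp add: f_def fxi_def fL_def fR_def aff_def)

lemma fLR0: "fst q = 0 \<Longrightarrow> fL q = fR q"
  by (simp add: fL_def fR_def aff_def)

lemma f_inv: "q \<in> Om \<Longrightarrow> f q \<in> Om"
  using inv_left inv_right f_eq by auto

lemma sigma_bound:
  assumes q: "q \<in> Om" and x: "fst q = 0"
  shows "v \<le> snd q"
proof -
  have "orient D D (fL q) + m3 * fst q + (-1) * snd q + v \<le> 0"
  proof (rule hullG[OF q fL_def])
    fix V assume "V \<in> {D, F, B}"
    then show "orient D D (fL V) + m3 * fst V + (-1) * snd V + v \<le> 0"
    proof -
      have "0 \<le> u*(u+a)*(1-a-r)*k*iu1*im" using pos a0 ar u1 by simp
      moreover have "0 \<le> sg*(a+m3)" using sgpos a0 by simp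
      ultimately show ?thesis using \<open>V \<in> {D, F, B}\<close> SD SF SB by (auto simp: orient_same)
    qed
  qed
  then show ?thesis using x by (simp add: orient_same)
qed

lemma line_bound:
  assumes q: "q \<in> Om" and l: "snd q = v + u * fst q"
  shows "fst q \<le> x1"
proof -
  have "orient D D (fL q) + (1 + cc*u) * fst q + (-cc) * snd q + (cc* v - x1) \<le> 0"
  proof (rule hullG[OF q fL_def])
    fix V assume "V \<in> {D, F, B}"
    have eqV: "orient D D (fL V) + (1 + cc*u) * fst V + (-cc) * snd V + (cc* v - x1)
       = fst V - x1 - cc*(snd V - v - u*fst V)"
      by (simp add: orient_same algebra_simps)
    show "orient D D (fL V) + (1 + cc*u) * fst V + (-cc) * snd V + (cc* v - x1) \<le> 0"
    proof -
      have "0 \<le> (1-a-r+r*(a+r))*k*ir" "0 \<le> (1-a-r)*S*k*e*ir*iu" using pos a0 ar r0 by simp_all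
      then show ?thesis unfolding eqV using \<open>V \<in> {D, F, B}\<close> WD WF WB by auto
    qed
  qed
  moreover have "orient D D (fL q) + (1 + cc*u) * fst q + (-cc) * snd q + (cc* v - x1)
       = fst q - x1 - cc*(snd q - v - u*fst q)"
    by (simp add: orient_same algebra_simps)
  ultimately show ?thesis using l by simp
qed

definition "M = \<bar>fst D\<bar> + \<bar>fst F\<bar> + \<bar>fst B\<bar>"

lemma x_bound:
  assumes q: "q \<in> Om"
  shows "\<bar>fst q\<bar> \<le> M"
proof -
  have "orient D D (fL q) + 1 * fst q + 0 * snd q + (-M) \<le> 0"
    by (rule hullG[OF q fL_def]) (auto simp: orient_same M_def)
  moreover have "orient D D (fL q) + (-1) * fst q + 0 * snd q + (-M) \<le> 0"
    by (rule hullG[OF q fL_def]) (auto simp: orient_same M_def)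
  ultimately show ?thesis by (simp add: orient_same)
qed
end



context byg begin

definition "endp p w m = p + (w, w * m)"
definition "good al n p w m \<longleftrightarrow> 0 < w \<and> -a \<le> m \<and> m \<le> r \<and>
   closed_segment p (endp p w m) \<subseteq> (f ^^ n) ` al"
definition "Vp = (0, v)"
definition "Wp = (x1, v + u * x1)"
definition "CONC al \<longleftrightarrow> (\<exists>n::nat. n \<ge> 1 \<and> (\<exists>P Q. fst P = 0 \<and> snd Q = 0 \<and>
           closed_segment P Q \<subseteq> (f ^^ n) ` al \<and> transversal_segments P Q Vp Wp))"

lemma fn_Suc: "(f ^^ Suc n) ` al = f ` ((f ^^ n) ` al)"
  by (simp only: funpow.simps comp_def image_image)

lemma orbit_in: "al \<subseteq> Om \<Longrightarrow> (f ^^ n) ` al \<subseteq> Om"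
proof (induction n)
  case 0 then show ?case by simp
next
  case (Suc n)
  have "(f ^^ n) ` al \<subseteq> Om" using Suc by blast
  then have "f ` ((f ^^ n) ` al) \<subseteq> Om" using f_inv by blast
  then show ?case unfolding fn_Suc .
qed

lemma image_step: "X \<subseteq> (f ^^ n) ` al \<Longrightarrow> f ` X \<subseteq> (f ^^ Suc n) ` al"
  unfolding fn_Suc by (rule image_mono)
lemma seg_fst_le: fixes x y z :: "real \<times> real" shows "z \<in> closed_segment x y \<Longrightarrow> fst x \<le> 0 \<Longrightarrow> fst y \<le> 0 \<Longrightarrow> fst z \<le> 0"
proof -
  assume "z \<in> closed_segment x y" "fst x \<le> 0" "fst y \<le> 0"
  then obtain t where t: "0 \<le> t" "t \<le> 1" "z = (1 - t) *\<^sub>R x + t *\<^sub>R y" unfolding in_segment by blast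
  have "fst z = (1 - t) * fst x + t * fst y" using t(3) by simp
  moreover have "(1 - t) * fst x \<le> 0" "t * fst y \<le> 0"
    using t \<open>fst x \<le> 0\<close> \<open>fst y \<le> 0\<close> by (simp_all add: mult_nonneg_nonpos)
  ultimately show ?thesis by simp
qed

lemma seg_fst_ge: fixes x y z :: "real \<times> real" shows "z \<in> closed_segment x y \<Longrightarrow> 0 \<le> fst x \<Longrightarrow> 0 \<le> fst y \<Longrightarrow> 0 \<le> fst z"
proof -
  assume "z \<in> closed_segment x y" "0 \<le> fst x" "0 \<le> fst y"
  then obtain t where t: "0 \<le> t" "t \<le> 1" "z = (1 - t) *\<^sub>R x + t *\<^sub>R y" unfolding in_segment by blast
  have "fst z = (1 - t) * fst x + t * fst y" using t(3) by simp
  moreover have "0 \<le> (1 - t) * fst x" "0 \<le> t * fst y"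
    using t \<open>0 \<le> fst x\<close> \<open>0 \<le> fst y\<close> by simp_all
  ultimately show ?thesis by simp
qed

lemma f_left_seg:
  assumes "fst x \<le> 0" "fst y \<le> 0"
  shows "f ` closed_segment x y = closed_segment (fL x) (fL y)"
proof -
  have "f ` closed_segment x y = fL ` closed_segment x y"
  proof (rule image_cong[OF refl])
    fix z assume "z \<in> closed_segment x y"
    then have "fst z \<le> 0" using seg_fst_le assms by blast
    then show "f z = fL z" using f_eq[of z] by simp
  qed
  then show ?thesis unfolding fL_def by (simp add: aff_segment)
qed

lemma f_right_seg:
  assumes "0 \<le> fst x" "0 \<le> fst y"
  shows "f ` closed_segment x y = closed_segment (fR x) (fR y)"
proof -
  have "f z = fR z" if "z \<in> closed_segment x y" for z
  proof -
    have "0 \<le> fst z" using seg_fst_ge[OF that assms] .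
    then show ?thesis using f_eq[of z] fLR0[of z] by auto
  qed
  then have "f ` closed_segment x y = fR ` closed_segment x y"
    by (rule image_cong[OF refl])
  then show ?thesis unfolding fR_def by (simp add: aff_segment)
qed

lemma push_left:
  assumes g: "good al n p w m" and x: "fst p + w \<le> 0"
  shows "good al (Suc n) (fL p) (w * (a + b + m)) (-(a*b)/(a + b + m))"
    and "endp (fL p) (w * (a + b + m)) (-(a*b)/(a + b + m)) = fL (endp p w m)"
    and "b * w \<le> w * (a + b + m)"
proof -
  have w: "0 < w" "-a \<le> m" "m \<le> r" and sub: "closed_segment p (endp p w m) \<subseteq> (f ^^ n) ` al"
    using g unfolding good_def by auto
  have abm: "0 < a + b + m" using w b1 by linarith
  show e: "endp (fL p) (w * (a + b + m)) (-(a*b)/(a + b + m)) = fL (endp p w m)"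
    unfolding endp_def fL_def aff_def using abm by (simp add: field_simps)
  show "b * w \<le> w * (a + b + m)"
  proof -
    have "0 \<le> (a + m) * w" using w by simp
    then show ?thesis by (simp add: algebra_simps)
  qed
  have "fst p \<le> 0" "fst (endp p w m) \<le> 0" using x w by (auto simp: endp_def)
  then have "f ` closed_segment p (endp p w m) = closed_segment (fL p) (fL (endp p w m))"
    by (rule f_left_seg)
  then have "closed_segment (fL p) (fL (endp p w m)) \<subseteq> (f ^^ Suc n) ` al"
    using image_step[OF sub] by simp
  moreover have "0 < w * (a + b + m)" using w abm by simp
  moreover have "-a \<le> -(a*b)/(a + b + m)"
  proof -
    have "0 \<le> a * (a + m)" using w a0 by simp
    then have "a * b \<le> a * (a + b + m)" by (simp add: algebra_simps)
    then show ?thesis using abm by (simp add: field_simps)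
  qed
  moreover have "-(a*b)/(a + b + m) \<le> r"
  proof -
    have "0 \<le> (a*b)/(a + b + m)" using abm a0 b1 by simp
    then show ?thesis using r0 by linarith
  qed
  ultimately show "good al (Suc n) (fL p) (w * (a + b + m)) (-(a*b)/(a + b + m))"
    unfolding good_def e by simp
qed

lemma push_right:
  assumes g: "good al n p w m" and x: "0 \<le> fst p"
  shows "good al (Suc n) (fR (endp p w m)) (w * (r + u - m)) (r*u/(r + u - m))"
    and "endp (fR (endp p w m)) (w * (r + u - m)) (r*u/(r + u - m)) = fR p"
    and "u * w \<le> w * (r + u - m)"
proof -
  have w: "0 < w" "-a \<le> m" "m \<le> r" and sub: "closed_segment p (endp p w m) \<subseteq> (f ^^ n) ` al"
    using g unfolding good_def by auto
  have rum: "0 < r + u - m" using w u1 by linarith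
  show e: "endp (fR (endp p w m)) (w * (r + u - m)) (r*u/(r + u - m)) = fR p"
    unfolding endp_def fR_def aff_def using rum by (simp add: field_simps)
  show "u * w \<le> w * (r + u - m)" using w by (simp add: algebra_simps)
  have "0 \<le> fst p" "0 \<le> fst (endp p w m)" using x w by (auto simp: endp_def)
  then have "f ` closed_segment p (endp p w m) = closed_segment (fR p) (fR (endp p w m))"
    by (rule f_right_seg)
  then have "closed_segment (fR (endp p w m)) (fR p) \<subseteq> (f ^^ Suc n) ` al"
    using image_step[OF sub] by (simp add: closed_segment_commute)
  moreover have "0 < w * (r + u - m)" using w rum by simp
  moreover have "-a \<le> r*u/(r + u - m)"
  proof -
    have "0 \<le> r*u/(r + u - m)" using rum r0 u1 by simp
    then show ?thesis using a0 by linarith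
  qed
  moreover have "r*u/(r + u - m) \<le> r"
  proof -
    have "r * u \<le> r * (r + u - m)" using w r0 by (simp add: algebra_simps)
    then show ?thesis using rum by (simp add: field_simps)
  qed
  ultimately show "good al (Suc n) (fR (endp p w m)) (w * (r + u - m)) (r*u/(r + u - m))"
    unfolding good_def e by simp
qed

lemma sub_good:
  assumes g: "good al n p w m" and st: "0 \<le> s" "s < t" "t \<le> 1"
  shows "good al n (p + (s * w, s * w * m)) ((t - s) * w) m"
    and "endp (p + (s * w, s * w * m)) ((t - s) * w) m = p + (t * w, t * w * m)"
proof -
  have w: "0 < w" "-a \<le> m" "m \<le> r" and sub: "closed_segment p (endp p w m) \<subseteq> (f ^^ n) ` al"
    using g unfolding good_def by auto
  show e: "endp (p + (s * w, s * w * m)) ((t - s) * w) m = p + (t * w, t * w * m)"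
    unfolding endp_def by (simp add: algebra_simps)
  have mem: "p + (c * w, c * w * m) \<in> closed_segment p (endp p w m)" if "0 \<le> c" "c \<le> 1" for c
    unfolding in_segment endp_def using that
    by (intro exI[of _ c]) (simp add: prod_eq_iff algebra_simps)
  have "closed_segment (p + (s * w, s * w * m)) (p + (t * w, t * w * m)) \<subseteq> closed_segment p (endp p w m)"
    by (rule closed_segment_subset) (use mem st in auto)
  then show "good al n (p + (s * w, s * w * m)) ((t - s) * w) m"
    unfolding good_def e using sub w st by auto
qed

end


context byg begin

lemma iu1_eq: "1 + v = iu1" "-v = u * iu1"
  using invs(1) unfolding v_def by (simp_all add: algebra_simps)

lemma x1pos: "0 < x1" unfolding x1_def using pos by simp

lemma found:
  assumes al: "al \<subseteq> Om" and g: "good al n pe w m"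
    and Q: "endp pe w m = Qp" "snd Qp = 0" "1 + v \<le> fst Qp" and x: "fst pe \<le> 0"
  shows "\<exists>P. fst P = 0 \<and> closed_segment P Qp \<subseteq> (f ^^ n) ` al \<and> transversal_segments P Qp Vp Wp"
proof -
  have w: "0 < w" "-a \<le> m" "m \<le> r" and sub: "closed_segment pe (endp pe w m) \<subseteq> (f ^^ n) ` al"
    using g unfolding good_def by auto
  have orb: "(f ^^ n) ` al \<subseteq> Om" by (rule orbit_in[OF al])
  define Qx where "Qx = fst Qp"
  have Qx1: "iu1 \<le> Qx" using Q(3) iu1_eq unfolding Qx_def by simp
  have Qxp: "0 < Qx" using Qx1 pos by linarith
  have Qxe: "Qx = fst pe + w" "0 = snd pe + w * m" using Q(1,2) unfolding Qx_def endp_def by auto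
  define t1 where "t1 = - fst pe / w"
  have t1: "0 \<le> t1" "t1 < 1" "t1 * w = - fst pe"
    using x w Qxe Qxp unfolding t1_def by (auto simp: field_simps)
  define P where "P = pe + (t1 * w, t1 * w * m)"
  define Py where "Py = snd P"
  have Pfst: "fst P = 0" unfolding P_def using t1 by simp
  have Pe: "P = (0, Py)" using Pfst Py_def by (simp add: prod_eq_iff)
  have Qe: "Qp = (Qx, 0)" using Q(2) Qx_def by (simp add: prod_eq_iff)
  have Py: "Py = - m * Qx"
  proof -
    have "Py = snd pe + t1 * w * m" unfolding Py_def P_def by simp
    also have "\<dots> = - m * Qx" using Qxe t1(3) by (simp add: algebra_simps)
    finally show ?thesis .
  qed
  have Pin: "P \<in> closed_segment pe Qp"
    unfolding in_segment P_def Q(1)[symmetric] endp_def using t1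
    by (intro exI[of _ t1]) (simp add: prod_eq_iff algebra_simps)
  have Qin: "Qp \<in> closed_segment pe Qp" by simp
  have PQsub: "closed_segment P Qp \<subseteq> closed_segment pe Qp"
    by (rule closed_segment_subset[OF Pin Qin convex_closed_segment])
  have PQsub2: "closed_segment P Qp \<subseteq> (f ^^ n) ` al" using PQsub sub Q(1) by auto
  have PinOm: "P \<in> Om" using PQsub2 orb by auto
  have vPy: "v \<le> Py" using sigma_bound[OF PinOm Pfst] Py_def by simp
  have um: "0 < u - m" using w u1 r0 ar a0 by linarith
  define xs where "xs = (Py - v) / (u - m)"
  have xs0: "0 \<le> xs" unfolding xs_def using vPy um by simp
  have xsQ: "xs \<le> Qx"
  proof -
    have "Py - v \<le> (u - m) * Qx"
      using Py iu1_eq Qx1 u1 by (simp add: algebra_simps)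
    then show ?thesis unfolding xs_def using um by (simp add: field_simps)
  qed
  have xseq: "Py + m * xs = v + u * xs"
    unfolding xs_def using um by (simp add: field_simps)
  define X where "X = (xs, v + u * xs)"
  have XinPQ: "X \<in> closed_segment P Qp"
  proof -
    have "X = (1 - xs / Qx) *\<^sub>R P + (xs / Qx) *\<^sub>R Qp"
      unfolding X_def Pe Qe using Qxp xseq Py by (simp add: field_simps)
    moreover have "0 \<le> xs / Qx" "xs / Qx \<le> 1" using xs0 xsQ Qxp by auto
    ultimately show ?thesis unfolding in_segment by blast
  qed
  have XOm: "X \<in> Om" using XinPQ PQsub2 orb by auto
  have xsx1: "xs \<le> x1" using line_bound[OF XOm] unfolding X_def by simp
  have XinVW: "X \<in> closed_segment Vp Wp"
  proof -
    have "X = (1 - xs / x1) *\<^sub>R Vp + (xs / x1) *\<^sub>R Wp"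
      unfolding X_def Vp_def Wp_def using x1pos by (simp add: field_simps)
    moreover have "0 \<le> xs / x1" "xs / x1 \<le> 1" using xs0 xsx1 x1pos by auto
    ultimately show ?thesis unfolding in_segment by blast
  qed
  have det: "fst (Qp - P) * snd (Wp - Vp) - snd (Qp - P) * fst (Wp - Vp) = x1 * Qx * (u - m)"
    unfolding Pe Qe Wp_def Vp_def using Py by (simp add: algebra_simps)
  have "transversal_segments P Qp Vp Wp"
    unfolding transversal_segments_def
  proof (intro conjI)
    show "P \<noteq> Qp" using Pe Qe Qxp by auto
    show "Vp \<noteq> Wp" unfolding Vp_def Wp_def using x1pos by auto
    show "closed_segment P Qp \<inter> closed_segment Vp Wp \<noteq> {}" using XinPQ XinVW by blast
    show "fst (Qp - P) * snd (Wp - Vp) - snd (Qp - P) * fst (Wp - Vp) \<noteq> 0"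
      unfolding det using x1pos Qxp um by simp
  qed
  then show ?thesis using Pfst PQsub2 by blast
qed

end


context byg begin

definition "rho = min b (min u (b*u^2/(b+u)))"

lemma rho_gt: "1 < rho" unfolding rho_def using b1 u1 J by simp

lemma rho_le: "rho \<le> b" "rho \<le> u" "rho \<le> b*u^2/(b+u)" unfolding rho_def by auto

lemma fL0: "fst z = 0 \<Longrightarrow> fL z = (snd z + 1, 0)"
  unfolding fL_def aff_def by simp

lemma step:
  assumes al: "al \<subseteq> Om" and g: "good al n p w m" and nc: "\<not> CONC al"
  shows "\<exists>n' p' w' m'. good al n' p' w' m' \<and> rho * w \<le> w'"
proof -
  have w: "0 < w" "-a \<le> m" "m \<le> r" and sub: "closed_segment p (endp p w m) \<subseteq> (f ^^ n) ` al"
    using g unfolding good_def by auto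
  have orb: "(f ^^ n) ` al \<subseteq> Om" by (rule orbit_in[OF al])
  consider (A) "fst p + w \<le> 0" | (B) "0 \<le> fst p" | (C) "fst p < 0" "0 < fst p + w" by linarith
  then show ?thesis
  proof cases
    case A
    have "rho * w \<le> b * w" using rho_le w by simp
    then show ?thesis using push_left[OF g A] by (meson order_trans)
  next
    case B
    have "rho * w \<le> u * w" using rho_le w by simp
    then show ?thesis using push_right[OF g B] by (meson order_trans)
  next
    case C
    define t0 where "t0 = - fst p / w"
    have t0: "0 < t0" "t0 < 1" "t0 * w = - fst p"
      using C w unfolding t0_def by (auto simp: field_simps)
    define z where "z = p + (t0 * w, t0 * w * m)"
    have gl0: "good al n (p + (0 * w, 0 * w * m)) ((t0 - 0) * w) m"
      "endp (p + (0 * w, 0 * w * m)) ((t0 - 0) * w) m = p + (t0 * w, t0 * w * m)"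
      using sub_good[OF g, of 0 t0] t0 by auto
    have p0: "p + (0::real, 0::real) = p" by (simp add: prod_eq_iff)
    have gl: "good al n p (t0 * w) m" "endp p (t0 * w) m = z"
      using gl0 unfolding z_def by (simp_all add: p0)
    have gr0: "good al n z ((1 - t0) * w) m"
      "endp z ((1 - t0) * w) m = p + (1 * w, 1 * w * m)"
      using sub_good[OF g, of t0 1] t0 unfolding z_def by auto
    have gr: "good al n z ((1 - t0) * w) m" "endp z ((1 - t0) * w) m = endp p w m"
      using gr0 unfolding endp_def by simp_all
    have zx: "fst z = 0" unfolding z_def using t0 by simp
    have zin: "z \<in> (f ^^ n) ` al"
      using gl(1) gl(2) unfolding good_def by (metis ends_in_segment(2) subsetD)
    have zOm: "z \<in> Om" using zin orb by auto
    have vz: "v \<le> snd z" using sigma_bound[OF zOm zx] .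
    define Qp where "Qp = (snd z + 1, 0::real)"
    have fLz: "fL z = Qp" using fL0[OF zx] Qp_def by simp
    have fRz: "fR z = Qp" using fLz fLR0[OF zx] by simp
    have Qv: "snd Qp = 0" "1 + v \<le> fst Qp" using vz unfolding Qp_def by auto
    have lx: "fst p + t0 * w \<le> 0" using t0 by simp
    note L = push_left[OF gl(1) lx]
    note R = push_right[OF gr(1)]
    have R': "good al (Suc n) (fR (endp p w m)) ((1 - t0) * w * (r + u - m)) (r * u / (r + u - m))"
      "endp (fR (endp p w m)) ((1 - t0) * w * (r + u - m)) (r * u / (r + u - m)) = Qp"
      "u * ((1 - t0) * w) \<le> (1 - t0) * w * (r + u - m)"
      using R zx gr(2) fRz by auto
    have L': "good al (Suc n) (fL p) (t0 * w * (a + b + m)) (-(a*b)/(a + b + m))"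
      "endp (fL p) (t0 * w * (a + b + m)) (-(a*b)/(a + b + m)) = Qp"
      "b * (t0 * w) \<le> t0 * w * (a + b + m)"
      using L gl(2) fLz by auto
    define H where "H = b * u / (b + u)"
    have bu: "0 < b + u" using b1 u1 by simp
    obtain pe w2 m2 where G2: "good al (Suc n) pe w2 m2" "endp pe w2 m2 = Qp" "H * w \<le> w2"
    proof (cases "u * (1 - t0) \<le> b * t0")
      case True
      have "H \<le> b * t0"
      proof -
        have "u \<le> t0 * (b + u)" using True by (simp add: algebra_simps)
        then have "b * u \<le> b * (t0 * (b + u))" using b1 by simp
        then have "b * u \<le> b * t0 * (b + u)" by (simp add: algebra_simps)
        then show ?thesis unfolding H_def using bu by (simp add: field_simps)
      qed
      then have "H * w \<le> b * (t0 * w)" using w by (simp add: mult_right_mono)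
      then show ?thesis using that[OF L'(1) L'(2)] L'(3) by linarith
    next
      case False
      have "H \<le> u * (1 - t0)"
      proof -
        have "b \<le> (1 - t0) * (b + u)" using False by (simp add: algebra_simps)
        then have "u * b \<le> u * ((1 - t0) * (b + u))" using u1 by simp
        then have "b * u \<le> u * (1 - t0) * (b + u)" by (simp add: algebra_simps)
        then show ?thesis unfolding H_def using bu by (simp add: field_simps)
      qed
      then have "H * w \<le> u * ((1 - t0) * w)" using w by (simp add: mult_right_mono)
      then show ?thesis using that[OF R'(1) R'(2)] R'(3) by linarith
    qed
    show ?thesis
    proof (cases "fst pe \<le> 0")
      case True
      obtain P where "fst P = 0" "closed_segment P Qp \<subseteq> (f ^^ Suc n) ` al"
        "transversal_segments P Qp Vp Wp"
        using found[OF al G2(1) G2(2) Qv True] by blast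
      then have "CONC al" unfolding CONC_def using Qv(1)
        by (intro exI[of _ "Suc n"] conjI exI[of _ P] exI[of _ Qp]) auto
      then show ?thesis using nc by simp
    next
      case False
      note R2 = push_right[OF G2(1)]
      have "rho * w \<le> u * (H * w)"
      proof -
        have "u * H = b * u^2 / (b + u)" unfolding H_def by (simp add: power2_eq_square)
        then have "rho \<le> u * H" using rho_le by simp
        then show ?thesis using w by (simp add: mult_right_mono)
      qed
      also have "\<dots> \<le> u * w2" using G2(3) u1 by simp
      finally show ?thesis using R2(1)[of] R2(3) False by (meson order_trans linorder_not_le less_imp_le)
    qed
  qed
qed

lemma grow:
  assumes al: "al \<subseteq> Om" and g: "good al n0 p0 w0 m0" and nc: "\<not> CONC al"
  shows "\<exists>n p w m. good al n p w m \<and> rho ^ N * w0 \<le> w"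
proof (induction N)
  case 0
  have "rho ^ 0 * w0 \<le> w0" by simp
  then show ?case using g by blast
next
  case (Suc N)
  then obtain n p w m where h: "good al n p w m" "rho ^ N * w0 \<le> w" by blast
  obtain n' p' w' m' where h2: "good al n' p' w' m'" "rho * w \<le> w'" using step[OF al h(1) nc] by blast
  have "rho ^ Suc N * w0 = rho * (rho ^ N * w0)" by simp
  also have "\<dots> \<le> rho * w" using h(2) rho_gt by simp
  also have "\<dots> \<le> w'" by (rule h2(2))
  finally show ?case using h2(1) by blast
qed

lemma good_bound:
  assumes al: "al \<subseteq> Om" and g: "good al n p w m"
  shows "w \<le> 2 * M"
proof -
  have w: "0 < w" and sub: "closed_segment p (endp p w m) \<subseteq> (f ^^ n) ` al"
    using g unfolding good_def by auto
  have orb: "(f ^^ n) ` al \<subseteq> Om" by (rule orbit_in[OF al])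
  have "p \<in> Om" "endp p w m \<in> Om" using sub orb by auto
  then have "\<bar>fst p\<bar> \<le> M" "\<bar>fst (endp p w m)\<bar> \<le> M" using x_bound by auto
  then show ?thesis unfolding endp_def by simp
qed

lemma main:
  assumes al: "al \<subseteq> Om" and g: "good al n0 p0 w0 m0"
  shows "CONC al"
proof (rule ccontr)
  assume nc: "\<not> CONC al"
  have w0: "0 < w0" using g unfolding good_def by auto
  obtain N where N: "2 * M / w0 < rho ^ N" using real_arch_pow[OF rho_gt] by blast
  obtain n p w m where h: "good al n p w m" "rho ^ N * w0 \<le> w" using grow[OF al g nc] by blast
  have "2 * M < rho ^ N * w0" using N w0 by (simp add: field_simps)
  also have "\<dots> \<le> w" by (rule h(2))
  also have "\<dots> \<le> 2 * M" by (rule good_bound[OF al h(1)])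
  finally show False by simp
qed

end


context byg begin

lemma sqL: "sqrt ((a+b)^2 - 4*(a*b)) = b - a"
proof -
  have "(a+b)^2 - 4*(a*b) = (b-a)^2" by (simp add: power2_eq_square algebra_simps)
  then show ?thesis using pos by simp
qed

lemma sqR: "sqrt ((-(r+u))^2 - 4*(r*u)) = u - r"
proof -
  have "(-(r+u))^2 - 4*(r*u) = (u-r)^2" by (simp add: power2_eq_square algebra_simps)
  then show ?thesis using r0 u1 ar a0 by simp
qed

lemma lams: "lamLs (a+b) (a*b) = a" "lamLu (a+b) (a*b) = b"
   "lamRs (-(r+u)) (r*u) = -r" "lamRu (-(r+u)) (r*u) = -u"
  unfolding lamLs_def lamLu_def lamRs_def lamRu_def sqL sqR by simp_all

lemma Dpt_eq: "Dpt (a+b) (a*b) = D"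
  unfolding Dpt_def D_def k_def lams by simp

lemma fD: "f D = F"
proof -
  have "0 < fst D" unfolding D_def using pos by simp
  then show ?thesis unfolding f_eq fR_def aff_def D_def F_def by (simp add: algebra_simps)
qed

lemma Bline1: "snd B + a * fst B = a * k"
  unfolding B_def by (simp add: algebra_simps)

lemma Bline2: "snd B + b * fst B = snd F + b * fst F"
  using kk ee unfolding B_def F_def sg_def S_def by simp algebra

lemma Bthe: "Bpt (a+b) (a*b) (-(r+u)) (r*u) = B"
proof -
  let ?Y = "Ypt (a+b) (a*b)"
  have fxiF: "fxi (a+b) (a*b) (-(r+u)) (r*u) (Dpt (a+b) (a*b)) = F"
    using fD unfolding Dpt_eq f_def .
  define rho0 where "rho0 = k * b / (b - 1)"
  have den: "a + b - a * b - 1 = (1 - a) * (b - 1)" by (simp add: algebra_simps)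
  have Y0: "?Y = (-1 / ((1 - a) * (b - 1)), a * b / ((1 - a) * (b - 1)))"
    unfolding Ypt_def by (simp only: den)
  have bm1: "b - 1 \<noteq> 0" using b1 by simp
  have y1: "k - rho0 = - k / (b - 1)" unfolding rho0_def using bm1 by (simp add: field_simps)
  have y2: "-1 / ((1 - a) * (b - 1)) = - k / (b - 1)" unfolding k_def by simp
  have y3: "a * b / ((1 - a) * (b - 1)) = a * rho0" unfolding k_def rho0_def by simp
  have Yeq: "?Y = (k - rho0, a * rho0)"
    unfolding Y0 y1 y2 y3 by simp
  have rho0p: "0 < rho0" unfolding rho0_def using pos b1 by simp
  have Bsub: "B = (k - sg, a * sg)" by (simp add: B_def)
  have sgle: "sg \<le> rho0"
  proof -
    have phe: "ph = b * (b - a) - S * (b - 1)" unfolding ph_def S_def by (simp add: algebra_simps)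
    have "S * (b - 1) \<le> b * (b - a)" using phe pos by simp
    then have "S * (b - 1) * k \<le> b * (b - a) * k" using pos by (simp add: mult_right_mono)
    then show ?thesis unfolding sg_def rho0_def e_def using pos b1 by (simp add: field_simps)
  qed
  have Bin: "B \<in> closed_segment ?Y (Dpt (a+b) (a*b))"
  proof -
    define t where "t = 1 - sg / rho0"
    have "0 \<le> t" "t \<le> 1" unfolding t_def using sgle rho0p sgpos by (auto simp: field_simps)
    moreover have "B = (1 - t) *\<^sub>R ?Y + t *\<^sub>R Dpt (a+b) (a*b)"
      unfolding Dpt_eq Yeq Bsub D_def t_def using rho0p by (simp add: field_simps)
    ultimately show ?thesis unfolding in_segment by blast
  qed
  have Bprop: "\<exists>vv t. vv \<noteq> 0 \<and> A_L (a+b) (a*b) vv = lamLs (a+b) (a*b) *\<^sub>R vv \<and>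
      B = fxi (a+b) (a*b) (-(r+u)) (r*u) (Dpt (a+b) (a*b)) + t *\<^sub>R vv"
  proof (intro exI conjI)
    show "(1::real, -b) \<noteq> 0" by (simp add: zero_prod_def)
    show "A_L (a+b) (a*b) (1, -b) = lamLs (a+b) (a*b) *\<^sub>R (1, -b)"
      unfolding lams A_L_def by (simp add: algebra_simps)
    show "B = fxi (a+b) (a*b) (-(r+u)) (r*u) (Dpt (a+b) (a*b)) + (fst B - fst F) *\<^sub>R (1, -b)"
      unfolding fxiF using Bline2 by (simp add: prod_eq_iff algebra_simps)
  qed
  have uniq: "y = B" if yin: "y \<in> closed_segment ?Y (Dpt (a+b) (a*b))"
    and yp: "\<exists>vv t. vv \<noteq> 0 \<and> A_L (a+b) (a*b) vv = lamLs (a+b) (a*b) *\<^sub>R vv \<and>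
      y = fxi (a+b) (a*b) (-(r+u)) (r*u) (Dpt (a+b) (a*b)) + t *\<^sub>R vv" for y
  proof -
    obtain t where t: "y = (1 - t) *\<^sub>R ?Y + t *\<^sub>R D" using yin unfolding in_segment Dpt_eq by blast
    have l1: "snd y + a * fst y = a * k" unfolding t Yeq D_def by (simp add: algebra_simps)
    obtain vv tt where vv: "A_L (a+b) (a*b) vv = a *\<^sub>R vv" "y = F + tt *\<^sub>R vv"
      using yp unfolding fxiF lams by blast
    have "snd vv = - b * fst vv" using vv(1) unfolding A_L_def by (simp add: prod_eq_iff algebra_simps)
    then have l2: "snd y + b * fst y = snd F + b * fst F" using vv(2) by (simp add: algebra_simps)
    have "(b - a) * (fst y - fst B) = 0" using l1 l2 Bline1 Bline2 by (simp add: algebra_simps)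
    then have "fst y = fst B" using pos by simp
    moreover then have "snd y = snd B" using l1 Bline1 by simp
    ultimately show ?thesis by (simp add: prod_eq_iff)
  qed
  show ?thesis unfolding Bpt_def
  proof (rule the_equality)
    show "B \<in> closed_segment ?Y (Dpt (a+b) (a*b)) \<and>
      (\<exists>vv t. vv \<noteq> 0 \<and> A_L (a+b) (a*b) vv = lamLs (a+b) (a*b) *\<^sub>R vv \<and>
      B = fxi (a+b) (a*b) (-(r+u)) (r*u) (Dpt (a+b) (a*b)) + t *\<^sub>R vv)"
      using Bin Bprop by (rule conjI)
  next
    fix y assume "y \<in> closed_segment ?Y (Dpt (a+b) (a*b)) \<and>
      (\<exists>vv t. vv \<noteq> 0 \<and> A_L (a+b) (a*b) vv = lamLs (a+b) (a*b) *\<^sub>R vv \<and>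
      y = fxi (a+b) (a*b) (-(r+u)) (r*u) (Dpt (a+b) (a*b)) + t *\<^sub>R vv)"
    then show "y = B" using uniq by blast
  qed
qed

lemma Omega_eq: "Omega (a+b) (a*b) (-(r+u)) (r*u) = Om"
  unfolding Omega_def Om_def Bthe Dpt_eq using fD unfolding f_def by simp

lemma Vpt_eq: "Vpt (-(r+u)) (r*u) = Vp"
  unfolding Vpt_def Vp_def lams v_def iu1_def using u1 by (simp add: field_simps)

lemma f_inj: "inj f"
proof (rule injI)
  fix p q assume h: "f p = f q"
  have ab: "0 < a * b" "0 < r * u" using a0 b1 r0 u1 by simp_all
  have sp: "snd (f p) = (if fst p \<le> 0 then -(a*b) * fst p else -(r*u) * fst p)"
    "snd (f q) = (if fst q \<le> 0 then -(a*b) * fst q else -(r*u) * fst q)"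
    unfolding f_eq fL_def fR_def aff_def by simp_all
  have fp: "fst (f p) = (if fst p \<le> 0 then (a+b) * fst p + snd p + 1 else -(r+u) * fst p + snd p + 1)"
    "fst (f q) = (if fst q \<le> 0 then (a+b) * fst q + snd q + 1 else -(r+u) * fst q + snd q + 1)"
    unfolding f_eq fL_def fR_def aff_def by simp_all
  have s: "(fst p \<le> 0) = (fst q \<le> 0)"
  proof (rule ccontr)
    assume "(fst p \<le> 0) \<noteq> (fst q \<le> 0)"
    then consider "fst p \<le> 0" "0 < fst q" | "0 < fst p" "fst q \<le> 0" by linarith
    then show False
    proof cases
      case 1
      have "a*b * fst p \<le> 0" using mult_nonneg_nonpos[of "a*b" "fst p"] 1 ab by simp
      then have "0 \<le> -(a*b) * fst p" by simp
      moreover have "-(r*u) * fst q < 0" using 1 ab by simp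
      ultimately show False using sp h 1 by simp
    next
      case 2
      have "a*b * fst q \<le> 0" using mult_nonneg_nonpos[of "a*b" "fst q"] 2 ab by simp
      then have "0 \<le> -(a*b) * fst q" by simp
      moreover have "-(r*u) * fst p < 0" using 2 ab by simp
      ultimately show False using sp h 2 by simp
    qed
  qed
  have "fst p = fst q" using sp h s ab by (cases "fst p \<le> 0") auto
  moreover then have "snd p = snd q" using fp h s by (cases "fst p \<le> 0") auto
  ultimately show "p = q" by (simp add: prod_eq_iff)
qed

lemma fW: "f Wp = Vp"
proof -
  have "0 < fst Wp" unfolding Wp_def using x1pos by simp
  then have "f Wp = fR Wp" using f_eq by simp
  moreover have rx: "r * x1 = iu1" unfolding x1_def using invs by (simp add: algebra_simps)
  moreover have "-(r+u) * x1 + (v + u * x1) + 1 = 0"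
  proof -
    have "-(r+u) * x1 + (v + u * x1) + 1 = (1 + v) - r * x1" by (simp add: algebra_simps)
    then show ?thesis using rx iu1_eq by simp
  qed
  moreover have "-(r*u) * x1 = v"
  proof -
    have "-(r*u) * x1 = -(u * (r * x1))" by (simp add: algebra_simps)
    also have "\<dots> = -(u * iu1)" using rx by simp
    also have "\<dots> = v" using iu1_eq(2) by linarith
    finally show ?thesis .
  qed
  ultimately show ?thesis unfolding fR_def aff_def Wp_def Vp_def by simp
qed

lemma invV: "inv f Vp = Wp"
  using fW f_inj by (metis inv_f_f)

lemma good_init:
  assumes "is_segment_with_slope al m" "-a \<le> m" "m \<le> r"
  shows "\<exists>p w. good al 0 p w m"
proof -
  obtain x y c where h: "x \<noteq> y" "al = closed_segment x y" "c \<noteq> 0" "y - x = c *\<^sub>R (1, m)"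
    using assms(1) unfolding is_segment_with_slope_def by blast
  show ?thesis
  proof (cases "0 < c")
    case True
    have "endp x c m = y" unfolding endp_def using h(4) by (simp add: prod_eq_iff algebra_simps)
    then have "good al 0 x c m" unfolding good_def using True assms h(2) by simp
    then show ?thesis by blast
  next
    case False
    then have c: "0 < -c" using h(3) by simp
    have "endp y (-c) m = x" unfolding endp_def using h(4) by (simp add: prod_eq_iff algebra_simps)
    then have "good al 0 y (-c) m" unfolding good_def using c assms h(2) by (simp add: closed_segment_commute)
    then show ?thesis by blast
  qed
qed

end



lemma lt_sq_root:
  fixes s c X :: real
  assumes "0 \<le> s" "s^2 = X" "c < 0 \<or> c^2 < X"
  shows "c < s"
proof (rule ccontr)
  assume "\<not> c < s"
  then have "s \<le> c" by simp
  then have "s^2 \<le> c^2" using assms(1) by (simp add: power_mono)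
  moreover have "0 \<le> c" using \<open>s \<le> c\<close> assms(1) by simp
  ultimately show False using assms by simp
qed

lemma sq_root_lt:
  fixes s c X :: real
  assumes "0 \<le> s" "s^2 = X" "0 < c" "X < c^2"
  shows "s < c"
proof (rule ccontr)
  assume "\<not> s < c"
  then have "c \<le> s" by simp
  then have "c^2 \<le> s^2" using assms(3) by (simp add: power_mono)
  then show False using assms by simp
qed

theorem lemma5p3:
  fixes tL dL tR dR :: real and alpha :: "(real \<times> real) set"
  assumes "(tL, dL, tR, dR) \<in> Phi_BYG"
    and "J1 tL dL tR dR > 1"
    and "lamLs tL dL + \<bar>lamRs tR dR\<bar> < 1"
    and "alpha \<subseteq> Omega tL dL tR dR"
    and "\<exists>m. m \<in> {- lamLs tL dL .. \<bar>lamRs tR dR\<bar>} \<and> is_segment_with_slope alpha m"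
  shows "\<exists>n::nat. n \<ge> 1 \<and> (\<exists>P Q. fst P = 0 \<and> snd Q = 0 \<and>
           closed_segment P Q \<subseteq> (fxi tL dL tR dR ^^ n) ` alpha \<and>
           transversal_segments P Q (Vpt tR dR) (inv (fxi tL dL tR dR) (Vpt tR dR)))"
proof -
  have h: "tL > dL + 1" "dL > 0" "tR < -(dR+1)" "dR > 0" "phi tL dL tR dR > 0"
    using assms(1) by (auto simp: Phi_BYG_def Phi_def)
  define sL where "sL = sqrt (tL^2 - 4*dL)"
  define sR where "sR = sqrt (tR^2 - 4*dR)"
  have dL4: "4*dL < tL^2"
  proof -
    have "(dL+1)^2 < tL^2" using h(1,2) by (intro power_strict_mono) auto
    moreover have "4*dL \<le> (dL+1)^2"
    proof -
      have "0 \<le> (dL - 1)^2" by simp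
      then show ?thesis by (simp add: power2_eq_square algebra_simps)
    qed
    ultimately show ?thesis by simp
  qed
  have dR4: "4*dR < tR^2"
  proof -
    have "(dR+1)^2 < (-tR)^2" using h(3,4) by (intro power_strict_mono) auto
    moreover have "4*dR \<le> (dR+1)^2"
    proof -
      have "0 \<le> (dR - 1)^2" by simp
      then show ?thesis by (simp add: power2_eq_square algebra_simps)
    qed
    ultimately show ?thesis by simp
  qed
  have sL: "0 \<le> sL" "sL^2 = tL^2 - 4*dL" unfolding sL_def using dL4 by auto
  have sR: "0 \<le> sR" "sR^2 = tR^2 - 4*dR" unfolding sR_def using dR4 by auto
  define a where "a = (tL - sL) / 2"
  define b where "b = (tL + sL) / 2"
  define r where "r = - (tR + sR) / 2"
  define u where "u = - (tR - sR) / 2"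
  have la: "lamLs tL dL = a" "lamLu tL dL = b" "lamRs tR dR = -r" "lamRu tR dR = -u"
    unfolding lamLs_def lamLu_def lamRs_def lamRu_def a_def b_def r_def u_def sL_def sR_def by (simp_all add: field_simps)
  have tLe: "tL = a + b" unfolding a_def b_def by (simp add: field_simps)
  have dLe: "dL = a * b"
  proof -
    have "a * b = (tL^2 - sL^2) / 4" unfolding a_def b_def by (simp add: power2_eq_square algebra_simps)
    then show ?thesis using sL by simp
  qed
  have tRe: "tR = -(r + u)" unfolding r_def u_def by (simp add: field_simps)
  have dRe: "dR = r * u"
  proof -
    have "r * u = (tR^2 - sR^2) / 4" unfolding r_def u_def by (simp add: power2_eq_square algebra_simps)
    then show ?thesis using sR by simp
  qed
  have a0: "0 < a"
  proof -
    have "sL < tL" by (rule sq_root_lt[OF sL]) (use h dL4 in auto)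
    then show ?thesis unfolding a_def by simp
  qed
  have a1: "a < 1"
  proof -
    have "tL - 2 < sL"
    proof (rule lt_sq_root[OF sL])
      show "tL - 2 < 0 \<or> (tL - 2)^2 < tL^2 - 4*dL"
        using h(1) by (simp add: power2_eq_square algebra_simps)
    qed
    then show ?thesis unfolding a_def by simp
  qed
  have b1: "1 < b"
  proof -
    have "2 - tL < sL"
    proof (rule lt_sq_root[OF sL])
      show "2 - tL < 0 \<or> (2 - tL)^2 < tL^2 - 4*dL"
        using h(1) by (simp add: power2_eq_square algebra_simps)
    qed
    then show ?thesis unfolding b_def by simp
  qed
  have r0: "0 < r"
  proof -
    have "sR < -tR" by (rule sq_root_lt[OF sR]) (use h dR4 in auto)
    then show ?thesis unfolding r_def by simp
  qed
  have r1: "r < 1"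
  proof -
    have "-tR - 2 < sR"
    proof (rule lt_sq_root[OF sR])
      show "-tR - 2 < 0 \<or> (-tR - 2)^2 < tR^2 - 4*dR"
        using h(3) by (simp add: power2_eq_square algebra_simps)
    qed
    then show ?thesis unfolding r_def by simp
  qed
  have u1: "1 < u"
  proof -
    have "2 + tR < sR"
    proof (rule lt_sq_root[OF sR])
      show "2 + tR < 0 \<or> (2 + tR)^2 < tR^2 - 4*dR"
        using h(3) by (simp add: power2_eq_square algebra_simps)
    qed
    then show ?thesis unfolding u_def by simp
  qed
  have ar: "a + r < 1" using assms(3) la r0 by simp
  have phipos: "0 < b*b - r*u*b - a*b*b - b*b*r - b*b*u + r*u + b*r + b*u"
  proof -
    have "phi tL dL tR dR = b*b - r*u*b - a*b*b - b*b*r - b*b*u + r*u + b*r + b*u"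
      unfolding phi_def la unfolding tLe dLe tRe dRe by (simp add: algebra_simps)
    then show ?thesis using h(5) by simp
  qed
  have J: "1 < b*u^2/(b+u)"
  proof -
    have "J1 tL dL tR dR = b*u^2/(b+u)" unfolding J1_def la using u1 by simp
    then show ?thesis using assms(2) by simp
  qed
  interpret Z: byg a b r u
    by unfold_locales (use a0 a1 b1 r0 u1 ar phipos J in auto)
  have fe: "fxi tL dL tR dR = Z.f" unfolding Z.f_def tLe dLe tRe dRe ..
  have Om: "Omega tL dL tR dR = Z.Om" unfolding tLe dLe tRe dRe by (rule Z.Omega_eq)
  have Ve: "Vpt tR dR = Z.Vp" unfolding tRe dRe by (rule Z.Vpt_eq)
  obtain m where m: "m \<in> {- a .. r}" "is_segment_with_slope alpha m"
    using assms(5) la r0 by auto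
  obtain p w where g: "Z.good alpha 0 p w m" using Z.good_init[OF m(2)] m(1) by auto
  have "Z.CONC alpha" by (rule Z.main[OF assms(4)[unfolded Om] g])
  then show ?thesis unfolding Z.CONC_def fe Ve Z.invV by simp
qed


end
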